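(* Assume $\rho$ satisfies the Loss Kernel Assumption, let $\zeta\ge\xi\ge0$, let $X^{(k)}\in\mathcal X$, let $G(\cdot\mid X^{(k)})$ be as defined below (with parameter $\xi$), and define $$H(X\mid X^{(k)})=\sum_{\alpha\in\mathcal A}\sum_{(i,j)\in\vec{\mathcal E}^{\alpha\alpha}}E^{\alpha\alpha}_{ij}(X\mid X^{(k)})+\sum_{\alpha\ne\beta}\sum_{(i,j)\in\vec{\mathcal E}^{\alpha\beta}}E^{\alpha\beta}_{ij}(X\mid X^{(k)})+\tfrac{\zeta}{2}\|X-X^{(k)}\|^2 .$$ Then there exist PSD matrices $\Pi^{\alpha(k)}_i\in\mathbb R^{(d+1)\times(d+1)}$ ($\alpha\in\mathcal A$, $1\le i\le n_\alpha$), with $\Pi^{\alpha(k)}=\mathrm{diag}(\Pi^{\alpha(k)}_1,\dots,\Pi^{\alpha(k)}_{n_\alpha})$ (acting so that $\|X^\alpha\|^2_{\Pi^{\alpha(k)}}=\sum_i\|X^\alpha_i\|^2_{\Pi^{\alpha(k)}_i}$) and $\Pi^{(k)}=\mathrm{diag}(\Pi^{1(k)},\dots,\Pi^{|\mathcal A|(k)})$, such that: (a) $H(X\mid X^{(k)})=\sum_\alpha H^\alpha(X^\alpha\mid X^{(k)})+F(X^{(k)})$ and $H^\alpha(X^\alpha\mid X^{(k)})=\sum_{i=1}^{n_\alpha}H^\alpha_i(X^\alpha_i\mid X^{(k)})$, where $H^\alpha(X^\alpha\mid X^{(k)})=\frac12\|X^\alpha-X^{\alpha(k)}\|^2_{\Pi^{\alpha(k)}}+\langle\nabla_{X^\alpha}F(X^{(k)}),X^\alpha-X^{\alpha(k)}\rangle$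 and $H^\alpha_i(X^\alpha_i\mid X^{(k)})=\frac12\|X^\alpha_i-X^{\alpha(k)}_i\|^2_{\Pi^{\alpha(k)}_i}+\langle\nabla_{X^\alpha_i}F(X^{(k)}),X^\alpha_i-X^{\alpha(k)}_i\rangle$; (b) $H(X\mid X^{(k)})=\frac12\|X-X^{(k)}\|^2_{\Pi^{(k)}}+\langle\nabla F(X^{(k)}),X-X^{(k)}\rangle+F(X^{(k)})$, and $H(X\mid X^{(k)})\ge G(X\mid X^{(k)})\ge F(X)$ for all $X$, with equalities if $X=X^{(k)}$; (c) $\Pi^{(k)}\succeq\Gamma^{(k)}\succeq M^{(k)}$, where $\Gamma^{(k)}=\mathrm{diag}(\Gamma^{1(k)},\dots,\Gamma^{|\mathcal A|(k)})$ is the block-diagonal matrix of the quadratic part of $G$ defined below; (d) there is a constant PSD matrix $\Pi$, independent of $X^{(k)}$, with $\Pi\succeq\Pi^{(k)}$ for every $X^{(k)}\in\mathcal X$; (e) $H^\alpha(X^\alpha\mid X^{(k)})\ge G^\alpha(X^\alpha\mid X^{(k)})$ for all $X^\alpha$, with equality if $X^\alpha=X^{\alpha(k)}$.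
   Context: Setup. Fix an integer $d\ge 2$, a finite set of nodes $\mathcal A=\{1,\dots,|\mathcal A|\}$, positive integers $n_\alpha$ ($\alpha\in\mathcal A$) and $n=\sum_{\alpha}n_\alpha$. An element $X\in\mathbb R^{d\times(d+1)n}$ is written $X=[X^1\ \cdots\ X^{|\mathcal A|}]$ with $X^\alpha=[t^\alpha\ R^\alpha]\in\mathbb R^{d\times(d+1)n_\alpha}$, where $t^\alpha=[t^\alpha_1\ \cdots\ t^\alpha_{n_\alpha}]$ with $t^\alpha_i\in\mathbb R^d$ and $R^\alpha=[R^\alpha_1\ \cdots\ R^\alpha_{n_\alpha}]$ with $R^\alpha_i\in\mathbb R^{d\times d}$; write $X^\alpha_i=[t^\alpha_i\ R^\alpha_i]\in\mathbb R^{d\times(d+1)}$. The feasible set is $\mathcal X=\{X:\ R^\alpha_i\in SO(d)\ \forall\alpha,i\}$; $X^{(k)}=[X^{1(k)}\ \cdots\ X^{|\mathcal A|(k)}]$. We use $\langle A,B\rangle=\mathrm{tr}(AB^\top)$, $\|\cdot\|$ the Frobenius norm, and for PSD $M$, $\|Y\|_M^2=\mathrm{tr}(YMY^\top)$. Data: for each ordered pair $(\alpha,\beta)\in\mathcal A\times\mathcal A$ (including $\alpha=\beta$) a finite set $\vec{\mathcal E}^{\alpha\beta}\subseteq\{1,\dots,n_\alpha\}\times\{1,\dots,n_\beta\}$, and for each $(i,j)\in\vec{\mathcal E}^{\alpha\beta}$ a rotation $\tilde R^{\alpha\beta}_{ij}\in SO(d)$, a vector $\tilde t^{\alpha\beta}_{ij}\in\mathbb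 R^d$ and weights $\kappa^{\alpha\beta}_{ij},\tau^{\alpha\beta}_{ij}\ge0$. For $(i,j)\in\vec{\mathcal E}^{\alpha\beta}$ define the quadratic form on $\mathbb R^{d\times(d+1)n}$ $$q^{\alpha\beta}_{ij}(X)=\kappa^{\alpha\beta}_{ij}\|R^\alpha_i\tilde R^{\alpha\beta}_{ij}-R^\beta_j\|^2+\tau^{\alpha\beta}_{ij}\|R^\alpha_i\tilde t^{\alpha\beta}_{ij}+t^\alpha_i-t^\beta_j\|^2 .$$ Loss Kernel Assumption: $\rho:\mathbb R^+\to\mathbb R$ ($\mathbb R^+=[0,\infty)$) satisfies (a) $\rho(s)\ge0$ with equality iff $s=0$; (b) $\rho$ is continuously differentiable on $\mathbb R^+$; (c) $\rho$ is concave; (d) $0\le\rho'(s)\le1$ for all $s\ge0$ and $\rho'(0)=1$; (e) $\varphi(X)=\rho(\|X\|^2)$ has Lipschitz continuous gradient on $\mathbb R^{m\times n}$. Define $F^{\alpha\alpha}_{ij}(X)=\frac12q^{\alpha\alpha}_{ij}(X)$ for $(i,j)\in\vec{\mathcal E}^{\alpha\alpha}$ and $F^{\alpha\beta}_{ij}(X)=\frac12\rho\big(q^{\alpha\beta}_{ij}(X)\big)$ for $\alpha\ne\beta$, $(i,j)\in\vec{\mathcal E}^{\alpha\beta}$ (defined on all of $\mathbb R^{d\times(d+1)n}$), and the objective $$F(X)=\sum_{\alpha\in\mathcal A}\sum_{(i,j)\in\vec{\mathcal E}^{\alpha\alpha}}F^{\alpha\alpha}_{ij}(X)+\sum_{\alpha\ne\beta}\sum_{(i,j)\in\vec{\mathcal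 E}^{\alpha\beta}}F^{\alpha\beta}_{ij}(X).$$ $\nabla$ denotes the Euclidean gradient and $\nabla_{X^\alpha}$, $\nabla_{X^\alpha_i}$ partial gradients. Weights: $\omega^{\alpha\beta(k)}_{ij}=1$ if $\alpha=\beta$ and $\omega^{\alpha\beta(k)}_{ij}=\rho'\big(q^{\alpha\beta}_{ij}(X^{(k)})\big)$ if $\alpha\neq\beta$. Decoupled quadratic form: for $(i,j)\in\vec{\mathcal E}^{\alpha\beta}$, $$p^{\alpha\beta}_{ij}(X)=2\Big(\kappa^{\alpha\beta}_{ij}\|R^\alpha_i\|^2+\kappa^{\alpha\beta}_{ij}\|R^\beta_j\|^2+\tau^{\alpha\beta}_{ij}\|R^\alpha_i\tilde t^{\alpha\beta}_{ij}+t^\alpha_i\|^2+\tau^{\alpha\beta}_{ij}\|t^\beta_j\|^2\Big),$$ and $E^{\alpha\beta}_{ij}(X\mid X^{(k)})=\tfrac12\omega^{\alpha\beta(k)}_{ij}\,p^{\alpha\beta}_{ij}(X-X^{(k)})+\langle\nabla F^{\alpha\beta}_{ij}(X^{(k)}),X-X^{(k)}\rangle+F^{\alpha\beta}_{ij}(X^{(k)})$ (for $\alpha=\beta$ as well). $G(X\mid X^{(k)})=\sum_{\alpha}\sum_{\vec{\mathcal E}^{\alpha\alpha}}F^{\alpha\alpha}_{ij}(X)+\sum_{\alpha\ne\beta}\sum_{\vec{\mathcal E}^{\alpha\beta}}E^{\alpha\beta}_{ij}(X\mid X^{(k)})+\frac\xi2\|X-X^{(k)}\|^2$; its quadratic part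 is block diagonal, i.e. $G(X\mid X^{(k)})=\sum_\alpha G^\alpha(X^\alpha\mid X^{(k)})+F(X^{(k)})$ with $G^\alpha(X^\alpha\mid X^{(k)})=\frac12\|X^\alpha-X^{\alpha(k)}\|^2_{\Gamma^{\alpha(k)}}+\langle\nabla_{X^\alpha}F(X^{(k)}),X^\alpha-X^{\alpha(k)}\rangle$ for PSD $\Gamma^{\alpha(k)}$. The PSD matrix $M^{(k)}$ is defined by $\|Y\|^2_{M^{(k)}}=\sum_{\alpha}\sum_{\vec{\mathcal E}^{\alpha\alpha}}q^{\alpha\alpha}_{ij}(Y)+\sum_{\alpha\ne\beta}\sum_{\vec{\mathcal E}^{\alpha\beta}}\omega^{\alpha\beta(k)}_{ij}q^{\alpha\beta}_{ij}(Y)$. *)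

theory Defs
  imports "HOL-Analysis.Analysis"
begin

text \<open>Poses are indexed by a finite type 'b; node b is the node alpha
  the pose belongs to (so the poses of node alpha are X^alpha_1..X^alpha_{n_alpha}).
  A block X^alpha_i = [t R] (a d x (d+1) matrix) is an element of real^('d option)^'d:
  column None is t, column Some c is column c of R.  The whole X is real^('d option)^'d^'b
  (its inner product / norm is the Frobenius one).\<close>

definition tcol :: "real^('d::finite) option^'d \<Rightarrow> real^'d" where
  "tcol Y = (\<chi> r. Y$r$None)"

definition rotp :: "real^('d::finite) option^'d \<Rightarrow> real^'d^'d" where
  "rotp Y = (\<chi> r c. Y$r$(Some c))"

definition feasible :: "real^('d::finite) option^'d^('b::finite) \<Rightarrow> bool" where
  "feasible X \<longleftrightarrow> (\<forall>b. rotation_matrix (rotp (X$b)))"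

definition qf :: "('b \<Rightarrow> 'b \<Rightarrow> real) \<Rightarrow> ('b \<Rightarrow> 'b \<Rightarrow> real) \<Rightarrow> ('b \<Rightarrow> 'b \<Rightarrow> real^'d^'d)
     \<Rightarrow> ('b \<Rightarrow> 'b \<Rightarrow> real^'d) \<Rightarrow> 'b \<times> 'b \<Rightarrow> real^('d::finite) option^'d^('b::finite) \<Rightarrow> real" where
  "qf \<kappa> \<tau> Rt tt e X =
     \<kappa> (fst e) (snd e) * (norm (rotp (X$fst e) ** Rt (fst e) (snd e) - rotp (X$snd e)))\<^sup>2
   + \<tau> (fst e) (snd e) * (norm (rotp (X$fst e) *v tt (fst e) (snd e) + tcol (X$fst e) - tcol (X$snd e)))\<^sup>2"

definition intra :: "('b \<Rightarrow> 'a) \<Rightarrow> 'b \<times> 'b \<Rightarrow> bool" where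
  "intra node e \<longleftrightarrow> node (fst e) = node (snd e)"

definition Fe :: "('b \<Rightarrow> 'a) \<Rightarrow> (real \<Rightarrow> real) \<Rightarrow> ('b \<Rightarrow> 'b \<Rightarrow> real) \<Rightarrow> ('b \<Rightarrow> 'b \<Rightarrow> real)
     \<Rightarrow> ('b \<Rightarrow> 'b \<Rightarrow> real^'d^'d) \<Rightarrow> ('b \<Rightarrow> 'b \<Rightarrow> real^'d) \<Rightarrow> 'b \<times> 'b
     \<Rightarrow> real^('d::finite) option^'d^('b::finite) \<Rightarrow> real" where
  "Fe node \<rho> \<kappa> \<tau> Rt tt e X =
     (if intra node e then qf \<kappa> \<tau> Rt tt e X / 2 else \<rho> (qf \<kappa> \<tau> Rt tt e X) / 2)"

definition Fobj where
  "Fobj node \<rho> \<kappa> \<tau> Rt tt Ed X = (\<Sum>e\<in>Ed. Fe node \<rho> \<kappa> \<tau> Rt tt e X)"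

definition grad :: "('v::real_inner \<Rightarrow> real) \<Rightarrow> 'v \<Rightarrow> 'v" where
  "grad f x = (THE g. (f has_derivative (\<lambda>h. g \<bullet> h)) (at x))"

definition omega where
  "omega node \<rho>' \<kappa> \<tau> Rt tt e Xk = (if intra node e then 1 else \<rho>' (qf \<kappa> \<tau> Rt tt e Xk))"

definition pf :: "('b \<Rightarrow> 'b \<Rightarrow> real) \<Rightarrow> ('b \<Rightarrow> 'b \<Rightarrow> real) \<Rightarrow> ('b \<Rightarrow> 'b \<Rightarrow> real^'d)
     \<Rightarrow> 'b \<times> 'b \<Rightarrow> real^('d::finite) option^'d^('b::finite) \<Rightarrow> real" where
  "pf \<kappa> \<tau> tt e X = 2 * (
       \<kappa> (fst e) (snd e) * (norm (rotp (X$fst e)))\<^sup>2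
     + \<kappa> (fst e) (snd e) * (norm (rotp (X$snd e)))\<^sup>2
     + \<tau> (fst e) (snd e) * (norm (rotp (X$fst e) *v tt (fst e) (snd e) + tcol (X$fst e)))\<^sup>2
     + \<tau> (fst e) (snd e) * (norm (tcol (X$snd e)))\<^sup>2)"

definition Ef where
  "Ef node \<rho> \<rho>' \<kappa> \<tau> Rt tt e X Xk =
     omega node \<rho>' \<kappa> \<tau> Rt tt e Xk * pf \<kappa> \<tau> tt e (X - Xk) / 2
   + grad (Fe node \<rho> \<kappa> \<tau> Rt tt e) Xk \<bullet> (X - Xk)
   + Fe node \<rho> \<kappa> \<tau> Rt tt e Xk"

definition Gf where
  "Gf node \<rho> \<rho>' \<kappa> \<tau> Rt tt Ed \<xi> X Xk =
     (\<Sum>e\<in>{e\<in>Ed. intra node e}. Fe node \<rho> \<kappa> \<tau> Rt tt e X)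
   + (\<Sum>e\<in>{e\<in>Ed. \<not> intra node e}. Ef node \<rho> \<rho>' \<kappa> \<tau> Rt tt e X Xk)
   + \<xi> / 2 * (norm (X - Xk))\<^sup>2"

definition Hf where
  "Hf node \<rho> \<rho>' \<kappa> \<tau> Rt tt Ed \<zeta> X Xk =
     (\<Sum>e\<in>Ed. Ef node \<rho> \<rho>' \<kappa> \<tau> Rt tt e X Xk) + \<zeta> / 2 * (norm (X - Xk))\<^sup>2"

definition Mform where
  "Mform node \<rho>' \<kappa> \<tau> Rt tt Ed Xk Y =
     (\<Sum>e\<in>{e\<in>Ed. intra node e}. qf \<kappa> \<tau> Rt tt e Y)
   + (\<Sum>e\<in>{e\<in>Ed. \<not> intra node e}. omega node \<rho>' \<kappa> \<tau> Rt tt e Xk * qf \<kappa> \<tau> Rt tt e Y)"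

text \<open>X as a d x (d+1)n matrix (columns indexed by pose and column-within-block).\<close>
definition flat :: "real^('c::finite)^('r::finite)^('b::finite) \<Rightarrow> real^('b \<times> 'c)^'r" where
  "flat X = (\<chi> r. \<chi> p. X$(fst p)$r$(snd p))"

definition qnorm2 :: "real^'c^'c \<Rightarrow> real^('c::finite)^('r::finite) \<Rightarrow> real" where
  "qnorm2 P Y = trace (Y ** P ** transpose Y)"

definition psd :: "real^('n::finite)^'n \<Rightarrow> bool" where
  "psd P \<longleftrightarrow> transpose P = P \<and> (\<forall>v. 0 \<le> v \<bullet> (P *v v))"

definition loewner_ge :: "real^('n::finite)^'n \<Rightarrow> real^'n^'n \<Rightarrow> bool" where
  "loewner_ge A B \<longleftrightarrow> psd (A - B)"

definition blockdiag :: "('b::finite \<Rightarrow> real^('c::finite)^'c) \<Rightarrow> real^('b \<times> 'c)^('b \<times> 'c)" where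
  "blockdiag P = (\<chi> p q. if fst p = fst q then P (fst p) $ snd p $ snd q else 0)"

definition node_blockdiag :: "('b::finite \<Rightarrow> 'a) \<Rightarrow> real^('b \<times> 'c::finite)^('b \<times> 'c) \<Rightarrow> bool" where
  "node_blockdiag node P \<longleftrightarrow> (\<forall>p q. node (fst p) \<noteq> node (fst q) \<longrightarrow> P$p$q = 0)"

definition restr :: "('b \<Rightarrow> 'a) \<Rightarrow> 'a \<Rightarrow> 'v::zero^('b::finite) \<Rightarrow> 'v^'b" where
  "restr node \<alpha> Y = (\<chi> b. if node b = \<alpha> then Y$b else 0)"

text \<open>Loss Kernel Assumption; \<rho>' is the derivative of \<rho>.  Item (e) is imposed on the
  space in which X lives.\<close>
definition loss_kernel :: "(real \<Rightarrow> real) \<Rightarrow> (real \<Rightarrow> real) \<Rightarrow> 'v::euclidean_space itself \<Rightarrow> bool" where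
  "loss_kernel \<rho> \<rho>' TYPE_V \<longleftrightarrow>
     (\<forall>s\<ge>0. 0 \<le> \<rho> s \<and> (\<rho> s = 0 \<longleftrightarrow> s = 0))
   \<and> (\<forall>s\<ge>0. (\<rho> has_real_derivative \<rho>' s) (at s within {0..})) \<and> continuous_on {0..} \<rho>'
   \<and> concave_on {0..} \<rho>
   \<and> (\<forall>s\<ge>0. 0 \<le> \<rho>' s \<and> \<rho>' s \<le> 1) \<and> \<rho>' 0 = 1
   \<and> (\<exists>g L. (\<forall>x::'v. ((\<lambda>y. \<rho> ((norm y)\<^sup>2)) has_derivative (\<lambda>h. g x \<bullet> h)) (at x))
            \<and> (\<forall>x y::'v. norm (g x - g y) \<le> L * norm (x - y)))"

end

theory Submission imports Defs begin

lemma qnorm2_expand: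
  "qnorm2 P Z = (\<Sum>r\<in>UNIV. \<Sum>p\<in>UNIV. \<Sum>q\<in>UNIV. Z$r$p * P$p$q * Z$r$q)"
  unfolding qnorm2_def trace_def matrix_matrix_mult_def transpose_def
  apply (simp add: sum_distrib_right)
  apply (subst sum.swap)
  apply (rule sum.cong[OF refl])
  apply (simp add: mult.assoc)
  done

lemma qnorm2_add: "qnorm2 (A + B) Z = qnorm2 A Z + qnorm2 B Z"
  by (simp add: qnorm2_expand algebra_simps sum.distrib)
lemma qnorm2_diff: "qnorm2 (A - B) Z = qnorm2 A Z - qnorm2 B Z"
  by (simp add: qnorm2_expand algebra_simps sum_subtractf)
lemma qnorm2_scale: "qnorm2 (c *\<^sub>R A) Z = c * qnorm2 A Z"
  by (simp add: qnorm2_expand algebra_simps sum_distrib_left)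
lemma qnorm2_zero[simp]: "qnorm2 0 Z = 0" by (simp add: qnorm2_expand)
lemma qnorm2_sum: "qnorm2 (\<Sum>i\<in>I. A i) Z = (\<Sum>i\<in>I. qnorm2 (A i) Z)"
  by (induction I rule: infinite_finite_induct) (auto simp: qnorm2_add)
lemma qnorm2_zeroZ[simp]: "qnorm2 P 0 = 0" by (simp add: qnorm2_expand)

definition outer :: "real^'n \<Rightarrow> real^('n::finite)^'n" where
  "outer w = (\<chi> p q. w$p * w$q)"

lemma qnorm2_outer: "qnorm2 (outer w) Z = (norm (Z *v w))\<^sup>2"
  unfolding qnorm2_expand power2_norm_eq_inner inner_vec_def outer_def matrix_vector_mult_def
  by (simp add: sum_product algebra_simps)

lemma qnorm2_id: "qnorm2 (mat 1) Z = (norm Z)\<^sup>2"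
proof -
  have "\<And>r p q. Z$r$p * (mat 1::real^'a^'a)$p$q * Z$r$q = (if p = q then Z$r$p * Z$r$q else 0)"
    by (simp add: mat_def)
  then show ?thesis unfolding qnorm2_expand power2_norm_eq_inner inner_vec_def by simp
qed


lemma sum_UNIV_prod: "sum f (UNIV::('a::finite \<times> 'c::finite) set) = (\<Sum>a\<in>UNIV. \<Sum>c\<in>UNIV. f (a, c))"
  using sum.cartesian_product[of "\<lambda>a c. f (a, c)" UNIV UNIV] by (simp add: UNIV_Times_UNIV)

lemma qnorm2_blockdiag:
  fixes Y :: "real^('c::finite)^('r::finite)^('b::finite)"
  shows "qnorm2 (blockdiag P) (flat Y) = (\<Sum>b\<in>UNIV. qnorm2 (P b) (Y$b))"
proof -
  have "qnorm2 (blockdiag P) (flat Y) =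
     (\<Sum>r\<in>UNIV. \<Sum>b\<in>UNIV. \<Sum>c\<in>UNIV. \<Sum>b'\<in>UNIV. \<Sum>c'\<in>UNIV.
        (if b' = b then Y$b$r$c * P b $c$c' * Y$b$r$c' else 0))"
    unfolding qnorm2_expand sum_UNIV_prod flat_def blockdiag_def
    by (auto intro!: sum.cong)
  also have "\<dots> = (\<Sum>r\<in>UNIV. \<Sum>b\<in>UNIV. \<Sum>c\<in>UNIV. \<Sum>c'\<in>UNIV. Y$b$r$c * P b $c$c' * Y$b$r$c')"
    by (subst sum.swap[where A=UNIV and B="UNIV::'c set"]) simp
  also have "\<dots> = (\<Sum>b\<in>UNIV. qnorm2 (P b) (Y$b))"
    unfolding qnorm2_expand by (rule sum.swap)
  finally show ?thesis .
qed

lemma psdI_form: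
  fixes P :: "real^('n::finite)^'n"
  assumes "transpose P = P" "\<And>Z::real^'n^('r::finite). 0 \<le> qnorm2 P Z"
  shows "psd P"
  unfolding psd_def
proof (intro conjI allI)
  show "transpose P = P" by fact
  fix v :: "real^'n"
  obtain r0 :: 'r where True by blast
  define Z :: "real^'n^'r" where "Z = (\<chi> r. if r = r0 then v else 0)"
  have "\<And>r. (\<Sum>p\<in>UNIV. \<Sum>q\<in>UNIV. Z$r$p * P$p$q * Z$r$q)
       = (if r = r0 then (\<Sum>p\<in>UNIV. \<Sum>q\<in>UNIV. v$p * P$p$q * v$q) else 0)"
    by (simp add: Z_def)
  then have "qnorm2 P Z = v \<bullet> (P *v v)"
    unfolding qnorm2_expand inner_vec_def matrix_vector_mult_def
    by (simp add: sum_distrib_left mult.assoc)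
  then show "0 \<le> v \<bullet> (P *v v)" using assms(2)[of Z] by simp
qed

lemma flat_surj: "\<exists>Y. Z = flat Y"
  by (rule exI[of _ "\<chi> b r c. Z$r$(b,c)"]) (simp add: flat_def vec_eq_iff)

lemma transpose_add': "transpose (A + B) = transpose A + transpose (B::real^'n^'n)"
  by (simp add: transpose_def vec_eq_iff)
lemma transpose_diff': "transpose (A - B) = transpose A - transpose (B::real^'n^'n)"
  by (simp add: transpose_def vec_eq_iff)
lemma transpose_scale': "transpose (c *\<^sub>R A) = c *\<^sub>R transpose (A::real^'n^'n)"
  by (simp add: transpose_def vec_eq_iff)
lemma transpose_zero': "transpose (0::real^'n^'n) = 0"
  by (simp add: transpose_def vec_eq_iff)
lemma transpose_sum': "transpose (\<Sum>i\<in>I. A i) = (\<Sum>i\<in>I. transpose (A i::real^'n^'n))"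
  by (induction I rule: infinite_finite_induct) (auto simp: transpose_add' transpose_zero')
lemma transpose_outer: "transpose (outer w) = outer w"
  by (simp add: transpose_def outer_def vec_eq_iff)
lemma transpose_blockdiag: "(\<And>b. transpose (P b) = P b) \<Longrightarrow> transpose (blockdiag P) = blockdiag P"
  by (simp add: transpose_def blockdiag_def vec_eq_iff)


lemma sum_UNIV_option: "sum f (UNIV::('a::finite) option set) = f None + (\<Sum>a\<in>UNIV. f (Some a))"
  by (simp add: UNIV_option_conv sum.reindex)

lemma norm_sq_cols: "(norm (A::real^('c::finite)^('r::finite)))\<^sup>2 = (\<Sum>c\<in>UNIV. (norm (column c A))\<^sup>2)"
  unfolding power2_norm_eq_inner inner_vec_def column_def
  by (simp add: sum.swap[of _ "UNIV::'r set"])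

lemma norm_sq_rows: "(norm (A::('a::real_inner)^('r::finite)))\<^sup>2 = (\<Sum>r\<in>UNIV. (norm (A$r))\<^sup>2)"
  unfolding power2_norm_eq_inner inner_vec_def by simp

definition wt :: "real^'d \<Rightarrow> real^('d::finite) option" where
  "wt t = (\<chi> c. case c of None \<Rightarrow> 1 | Some c0 \<Rightarrow> t$c0)"
definition wR :: "real^'d^'d \<Rightarrow> 'd \<Rightarrow> real^('d::finite) option" where
  "wR R c' = (\<chi> c. case c of None \<Rightarrow> 0 | Some c0 \<Rightarrow> R$c0$c')"
definition lift :: "'b \<Rightarrow> real^'c \<Rightarrow> real^(('b::finite) \<times> ('c::finite))" where
  "lift b u = (\<chi> p. if fst p = b then u$(snd p) else 0)"

lemma column_rotp: "column c (rotp Z) = Z *v axis (Some c) 1"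
  by (simp add: column_def rotp_def matrix_vector_mult_def axis_def vec_eq_iff if_distrib cong: if_cong)

lemma tcol_mv: "tcol Z = Z *v axis None 1"
  by (simp add: tcol_def matrix_vector_mult_def axis_def vec_eq_iff if_distrib cong: if_cong)

lemma rotp_t_tcol: "rotp Z *v t + tcol Z = Z *v wt t"
  by (simp add: tcol_def rotp_def wt_def matrix_vector_mult_def vec_eq_iff sum_UNIV_option)

lemma column_rotp_R: "column c' (rotp Z ** R) = Z *v wR R c'"
  by (simp add: column_def rotp_def wR_def matrix_vector_mult_def matrix_matrix_mult_def vec_eq_iff sum_UNIV_option)

lemma flat_lift: "flat Y *v lift b u = Y$b *v u"
proof -
  have "\<And>r. (\<Sum>a\<in>UNIV. \<Sum>c\<in>UNIV. Y $ a $ r $ c * (if a = b then u $ c else 0))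
     = (\<Sum>c\<in>UNIV. Y $ b $ r $ c * u $ c)"
    by (subst sum.swap) (simp add: if_distrib[of "\<lambda>x. _ * x"] cong: if_cong)
  then show ?thesis
    unfolding flat_def lift_def matrix_vector_mult_def sum_UNIV_prod apply (simp add: vec_eq_iff)
    by (smt (verit, best) snd_conv sum.cong)
qed

lemma mv_diff: "A *v (u - v) = A *v u - A *v (v::real^'n)"
  by (simp add: matrix_vector_mult_def vec_eq_iff algebra_simps sum_subtractf)


lemma linear_repr:
  fixes D :: "'v::euclidean_space \<Rightarrow> real"
  assumes "linear D"
  shows "D h = (\<Sum>i\<in>Basis. D i *\<^sub>R i) \<bullet> h"
proof -
  have "D h = D (\<Sum>i\<in>Basis. (h \<bullet> i) *\<^sub>R i)" by (simp only: euclidean_representation)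
  also have "\<dots> = (\<Sum>i\<in>Basis. (h \<bullet> i) * D i)"
    using assms by (simp add: linear_sum linear_scale)
  also have "\<dots> = (\<Sum>i\<in>Basis. D i *\<^sub>R i) \<bullet> h"
    by (simp add: inner_sum_right mult.commute inner_commute)
  finally show ?thesis .
qed

lemma grad_eq:
  fixes f :: "'v::euclidean_space \<Rightarrow> real"
  assumes "(f has_derivative (\<lambda>h. g \<bullet> h)) (at x)"
  shows "grad f x = g"
  unfolding grad_def
proof (rule the_equality)
  show "(f has_derivative (\<lambda>h. g \<bullet> h)) (at x)" by fact
  fix g' assume "(f has_derivative (\<lambda>h. g' \<bullet> h)) (at x)"
  from has_derivative_unique[OF this assms] have "\<And>h. g' \<bullet> h = g \<bullet> h" by (rule fun_cong)
  from this[of "g' - g"] have "(g' - g) \<bullet> (g' - g) = 0" by (simp add: inner_diff_left)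
  then show "g' = g" by simp
qed

lemma grad_inner:
  fixes f :: "'v::euclidean_space \<Rightarrow> real"
  assumes "(f has_derivative D) (at x)"
  shows "grad f x \<bullet> h = D h"
proof -
  have lin: "linear D" using assms by (simp add: has_derivative_linear)
  have "(f has_derivative (\<lambda>h. (\<Sum>i\<in>Basis. D i *\<^sub>R i) \<bullet> h)) (at x)"
    using assms by (rule has_derivative_eq_rhs) (rule ext, rule linear_repr[OF lin])
  then have "grad f x = (\<Sum>i\<in>Basis. D i *\<^sub>R i)" by (rule grad_eq)
  moreover have "D h = (\<Sum>i\<in>Basis. D i *\<^sub>R i) \<bullet> h" by (rule linear_repr[OF lin])
  ultimately show ?thesis by (simp only:)
qed

lemma loss_kernel_tangent:
  assumes LK: "loss_kernel \<rho> \<rho>' TYPE('v::euclidean_space)" and s: "0 \<le> s" and t: "0 \<le> t"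
  shows "\<rho> t \<le> \<rho> s + \<rho>' s * (t - s)"
proof -
  have der: "\<And>x. 0 \<le> x \<Longrightarrow> (\<rho> has_real_derivative \<rho>' x) (at x within {0..})"
    and conc: "concave_on {0..} \<rho>" and b1: "\<And>x. 0 \<le> x \<Longrightarrow> \<rho>' x \<le> 1" and r0: "\<rho>' 0 = 1"
    using LK unfolding loss_kernel_def by blast+
  show ?thesis
  proof (cases "s = 0")
    case True
    show ?thesis
    proof (cases "t = 0")
      case True with \<open>s = 0\<close> show ?thesis by simp
    next
      case False
      then have "0 < t" using t by simp
      have "\<exists>x\<in>{0<..<t}. \<rho> t - \<rho> 0 = (\<lambda>h. \<rho>' x * h) (t - 0)"
        apply (rule mvt_simple[OF \<open>0 < t\<close>, of \<rho> "\<lambda>x h. \<rho>' x * h"])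
        apply (rule has_derivative_subset[of _ _ _ "{0..}"])
        subgoal for x using der[of x] unfolding has_field_derivative_def by simp
        subgoal by auto
        done
      then obtain x where x: "0 < x" "\<rho> t - \<rho> 0 = t * \<rho>' x" by (auto simp: mult.commute)
      have "t * \<rho>' x \<le> t * 1" using b1[of x] x(1) \<open>0 < t\<close> by (intro mult_left_mono) auto
      then show ?thesis using x True r0 by simp
    qed
  next
    case False
    then have "0 < s" using s by simp
    have cv: "convex_on {0..} (\<lambda>x. - \<rho> x)" using conc by (simp add: concave_on_def)
    have "(- \<rho>' s) * (t - s) \<le> (- \<rho> t) - (- \<rho> s)"
      apply (rule convex_on_imp_above_tangent[OF cv])
      subgoal by simp
      subgoal using \<open>0 < s\<close> by simp
      subgoal using t by simp
      subgoal using der[OF s] by (rule Deriv.field_differentiable_minus)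
      done
    then show ?thesis by simp
  qed
qed



definition LR :: "('b \<Rightarrow> 'b \<Rightarrow> real^'d^'d) \<Rightarrow> 'b \<times> 'b \<Rightarrow> real^('d::finite) option^'d^('b::finite) \<Rightarrow> real^'d^'d" where
  "LR Rt e X = rotp (X$fst e) ** Rt (fst e) (snd e) - rotp (X$snd e)"
definition LT :: "('b \<Rightarrow> 'b \<Rightarrow> real^'d) \<Rightarrow> 'b \<times> 'b \<Rightarrow> real^('d::finite) option^'d^('b::finite) \<Rightarrow> real^'d" where
  "LT tt e X = rotp (X$fst e) *v tt (fst e) (snd e) + tcol (X$fst e) - tcol (X$snd e)"

lemma qf_L: "qf \<kappa> \<tau> Rt tt e X = \<kappa> (fst e) (snd e) * (norm (LR Rt e X))\<^sup>2 + \<tau> (fst e) (snd e) * (norm (LT tt e X))\<^sup>2"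
  by (simp add: qf_def LR_def LT_def)

lemma linear_LR: "linear (LR Rt e)"
  by (rule linearI)
     (simp_all add: LR_def rotp_def matrix_matrix_mult_def vec_eq_iff algebra_simps sum.distrib sum_distrib_left)

lemma linear_LT: "linear (LT tt e)"
  by (rule linearI)
     (simp_all add: LT_def rotp_def tcol_def matrix_vector_mult_def vec_eq_iff algebra_simps sum.distrib sum_distrib_left)

lemma sqL_deriv:
  fixes L :: "'v::euclidean_space \<Rightarrow> 'w::real_inner"
  assumes "linear L"
  shows "((\<lambda>X. (norm (L X))\<^sup>2) has_derivative (\<lambda>h. 2 * (L X \<bullet> L h))) (at X)"
proof -
  have bl: "bounded_linear L" using assms by (simp add: linear_conv_bounded_linear)
  have "((\<lambda>X. L X \<bullet> L X) has_derivative (\<lambda>h. L X \<bullet> L h + L h \<bullet> L X)) (at X)"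
    by (rule has_derivative_inner) (rule bounded_linear_imp_has_derivative[OF bl])+
  then show ?thesis unfolding power2_norm_eq_inner
    by (rule has_derivative_eq_rhs) (auto simp: inner_commute fun_eq_iff)
qed

lemma sqL_expand:
  assumes "linear L"
  shows "(norm (L (X + Y)))\<^sup>2 = (norm (L X))\<^sup>2 + 2 * (L X \<bullet> L Y) + (norm (L Y))\<^sup>2"
  using assms by (simp add: linear_add power2_norm_eq_inner inner_add inner_commute)

definition Dq where
  "Dq \<kappa> \<tau> Rt tt e X h = 2 * \<kappa> (fst e) (snd e) * (LR Rt e X \<bullet> LR Rt e h) + 2 * \<tau> (fst e) (snd e) * (LT tt e X \<bullet> LT tt e h)"

lemma qf_deriv: "(qf \<kappa> \<tau> Rt tt e has_derivative Dq \<kappa> \<tau> Rt tt e X) (at X)"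
proof -
  have "((\<lambda>X. \<kappa> (fst e) (snd e) * (norm (LR Rt e X))\<^sup>2 + \<tau> (fst e) (snd e) * (norm (LT tt e X))\<^sup>2)
     has_derivative (\<lambda>h. \<kappa> (fst e) (snd e) * (2 * (LR Rt e X \<bullet> LR Rt e h)) + \<tau> (fst e) (snd e) * (2 * (LT tt e X \<bullet> LT tt e h)))) (at X)"
    by (intro has_derivative_add has_derivative_mult_right sqL_deriv linear_LR linear_LT)
  then show ?thesis unfolding qf_L[abs_def] Dq_def
    by (rule has_derivative_eq_rhs) (auto simp: fun_eq_iff)
qed

lemma qf_expand: "qf \<kappa> \<tau> Rt tt e (X + Y) = qf \<kappa> \<tau> Rt tt e X + Dq \<kappa> \<tau> Rt tt e X Y + qf \<kappa> \<tau> Rt tt e Y"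
  unfolding qf_L Dq_def sqL_expand[OF linear_LR] sqL_expand[OF linear_LT] by (simp add: algebra_simps)

lemma qf_nonneg: "0 \<le> \<kappa> (fst e) (snd e) \<Longrightarrow> 0 \<le> \<tau> (fst e) (snd e) \<Longrightarrow> 0 \<le> qf \<kappa> \<tau> Rt tt e X"
  unfolding qf_L by simp


lemma LK_facts:
  assumes "loss_kernel \<rho> \<rho>' TYPE('v::euclidean_space)"
  shows "\<And>s. 0 \<le> s \<Longrightarrow> (\<rho> has_real_derivative \<rho>' s) (at s within {0..})"
    and "\<And>s. 0 \<le> s \<Longrightarrow> 0 \<le> \<rho>' s" and "\<And>s. 0 \<le> s \<Longrightarrow> \<rho>' s \<le> 1"
  using assms unfolding loss_kernel_def by blast+

lemma Fe_deriv:
  assumes LK: "loss_kernel \<rho> \<rho>' TYPE('v::euclidean_space)"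
    and k: "0 \<le> \<kappa> (fst e) (snd e)" and t: "0 \<le> \<tau> (fst e) (snd e)"
  shows "(Fe node \<rho> \<kappa> \<tau> Rt tt e has_derivative
          (\<lambda>h. omega node \<rho>' \<kappa> \<tau> Rt tt e X * Dq \<kappa> \<tau> Rt tt e X h / 2)) (at X)"
proof (cases "intra node e")
  case True
  have eq: "Fe node \<rho> \<kappa> \<tau> Rt tt e = (\<lambda>X. qf \<kappa> \<tau> Rt tt e X / 2)"
    by (rule ext) (simp add: Fe_def True)
  have "((\<lambda>X. qf \<kappa> \<tau> Rt tt e X / 2) has_derivative (\<lambda>h. Dq \<kappa> \<tau> Rt tt e X h / 2)) (at X)"
    by (rule bounded_linear.has_derivative[OF bounded_linear_divide]) (rule qf_deriv)
  then show ?thesis unfolding eq omega_def using True by simp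
next
  case False
  have eq: "Fe node \<rho> \<kappa> \<tau> Rt tt e = (\<lambda>X. \<rho> (qf \<kappa> \<tau> Rt tt e X) / 2)"
    by (rule ext) (simp add: Fe_def False)
  have "((\<lambda>X. \<rho> (qf \<kappa> \<tau> Rt tt e X)) has_derivative
        (\<lambda>h. \<rho>' (qf \<kappa> \<tau> Rt tt e X) * Dq \<kappa> \<tau> Rt tt e X h)) (at X within UNIV)"
  proof (rule has_derivative_in_compose2[of "{0..}" \<rho> "\<lambda>s. (*) (\<rho>' s)"])
    show "\<And>x. x \<in> {0..} \<Longrightarrow> (\<rho> has_derivative (*) (\<rho>' x)) (at x within {0..})"
      using LK_facts(1)[OF LK] unfolding has_field_derivative_def by simp
    show "qf \<kappa> \<tau> Rt tt e ` UNIV \<subseteq> {0..}" using qf_nonneg[where \<kappa>=\<kappa> and \<tau>=\<tau> and e=e, OF k t] by auto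
  qed (auto intro: qf_deriv)
  then have "((\<lambda>X. \<rho> (qf \<kappa> \<tau> Rt tt e X) / 2) has_derivative
        (\<lambda>h. \<rho>' (qf \<kappa> \<tau> Rt tt e X) * Dq \<kappa> \<tau> Rt tt e X h / 2)) (at X)"
    by (rule bounded_linear.has_derivative[OF bounded_linear_divide, rotated])
  then show ?thesis unfolding eq omega_def using False by simp
qed

lemma Fe_grad:
  assumes LK: "loss_kernel \<rho> \<rho>' TYPE('v::euclidean_space)"
    and k: "0 \<le> \<kappa> (fst e) (snd e)" and t: "0 \<le> \<tau> (fst e) (snd e)"
  shows "grad (Fe node \<rho> \<kappa> \<tau> Rt tt e) X \<bullet> h = omega node \<rho>' \<kappa> \<tau> Rt tt e X * Dq \<kappa> \<tau> Rt tt e X h / 2"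
  by (rule grad_inner[OF Fe_deriv[where \<kappa>=\<kappa> and \<tau>=\<tau> and e=e, OF LK k t]])

lemma omega_bounds:
  assumes LK: "loss_kernel \<rho> \<rho>' TYPE('v::euclidean_space)"
    and k: "0 \<le> \<kappa> (fst e) (snd e)" and t: "0 \<le> \<tau> (fst e) (snd e)"
  shows "0 \<le> omega node \<rho>' \<kappa> \<tau> Rt tt e X" "omega node \<rho>' \<kappa> \<tau> Rt tt e X \<le> 1"
  using LK_facts(2,3)[OF LK, of "qf \<kappa> \<tau> Rt tt e X"] qf_nonneg[where \<kappa>=\<kappa> and \<tau>=\<tau> and e=e and Rt=Rt and tt=tt and X=X, OF k t]
  by (auto simp: omega_def)

lemma Fe_intra_eq:
  assumes LK: "loss_kernel \<rho> \<rho>' TYPE('v::euclidean_space)"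
    and k: "0 \<le> \<kappa> (fst e) (snd e)" and t: "0 \<le> \<tau> (fst e) (snd e)" and i: "intra node e"
  shows "Fe node \<rho> \<kappa> \<tau> Rt tt e (X + Y) = Fe node \<rho> \<kappa> \<tau> Rt tt e X + grad (Fe node \<rho> \<kappa> \<tau> Rt tt e) X \<bullet> Y
           + qf \<kappa> \<tau> Rt tt e Y / 2"
  unfolding Fe_grad[where \<kappa>=\<kappa> and \<tau>=\<tau> and e=e, OF LK k t] using i
  by (simp add: Fe_def omega_def qf_expand add_divide_distrib)

lemma Fe_inter_le:
  assumes LK: "loss_kernel \<rho> \<rho>' TYPE('v::euclidean_space)"
    and k: "0 \<le> \<kappa> (fst e) (snd e)" and t: "0 \<le> \<tau> (fst e) (snd e)" and i: "\<not> intra node e"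
  shows "Fe node \<rho> \<kappa> \<tau> Rt tt e (X + Y) \<le> Fe node \<rho> \<kappa> \<tau> Rt tt e X + grad (Fe node \<rho> \<kappa> \<tau> Rt tt e) X \<bullet> Y
           + omega node \<rho>' \<kappa> \<tau> Rt tt e X * qf \<kappa> \<tau> Rt tt e Y / 2"
proof -
  have "\<rho> (qf \<kappa> \<tau> Rt tt e (X + Y)) \<le> \<rho> (qf \<kappa> \<tau> Rt tt e X)
          + \<rho>' (qf \<kappa> \<tau> Rt tt e X) * (qf \<kappa> \<tau> Rt tt e (X + Y) - qf \<kappa> \<tau> Rt tt e X)"
    by (rule loss_kernel_tangent[OF LK qf_nonneg[where \<kappa>=\<kappa> and \<tau>=\<tau> and e=e, OF k t] qf_nonneg[where \<kappa>=\<kappa> and \<tau>=\<tau> and e=e, OF k t]])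
  then show ?thesis
    unfolding Fe_grad[where \<kappa>=\<kappa> and \<tau>=\<tau> and e=e, OF LK k t] using i
    by (simp add: Fe_def omega_def qf_expand add_divide_distrib algebra_simps)
qed

lemma norm_diff_sq_le: "(norm (u - v))\<^sup>2 \<le> 2 * (norm u)\<^sup>2 + 2 * (norm (v::'a::real_normed_vector))\<^sup>2"
proof -
  have "norm (u - v) \<le> norm u + norm v" by (rule norm_triangle_ineq4)
  then have "(norm (u - v))\<^sup>2 \<le> (norm u + norm v)\<^sup>2" by (intro power_mono) auto
  also have "\<dots> \<le> 2 * (norm u)\<^sup>2 + 2 * (norm v)\<^sup>2"
    using sum_squares_ge_zero[of "norm u - norm v" 0] by (simp add: power2_eq_square algebra_simps)
  finally show ?thesis .
qed

lemma norm_sq_trace: "(norm (B::real^('n::finite)^('m::finite)))\<^sup>2 = trace (B ** transpose B)"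
  unfolding power2_norm_eq_inner inner_vec_def trace_def matrix_matrix_mult_def transpose_def
  by simp

lemma norm_mul_orth:
  assumes "orthogonal_matrix R"
  shows "norm (A ** R) = norm (A::real^('n::finite)^('m::finite))"
proof -
  have "(norm (A ** R))\<^sup>2 = (norm A)\<^sup>2"
    unfolding norm_sq_trace matrix_transpose_mul
    using assms by (simp add: matrix_mul_assoc[symmetric] orthogonal_matrix_def)
         (simp add: matrix_mul_assoc)
  then show ?thesis by simp
qed


lemma qf_le_pf:
  assumes R: "rotation_matrix (Rt (fst e) (snd e))"
    and k: "0 \<le> \<kappa> (fst e) (snd e)" and t: "0 \<le> \<tau> (fst e) (snd e)"
  shows "qf \<kappa> \<tau> Rt tt e Y \<le> pf \<kappa> \<tau> tt e Y"
proof -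
  have o: "orthogonal_matrix (Rt (fst e) (snd e))" using R by (simp add: rotation_matrix_def)
  have 1: "(norm (LR Rt e Y))\<^sup>2 \<le> 2 * (norm (rotp (Y$fst e)))\<^sup>2 + 2 * (norm (rotp (Y$snd e)))\<^sup>2"
    using norm_diff_sq_le[of "rotp (Y$fst e) ** Rt (fst e) (snd e)" "rotp (Y$snd e)"]
    unfolding LR_def norm_mul_orth[OF o] .
  have 2: "(norm (LT tt e Y))\<^sup>2 \<le> 2 * (norm (rotp (Y$fst e) *v tt (fst e) (snd e) + tcol (Y$fst e)))\<^sup>2
             + 2 * (norm (tcol (Y$snd e)))\<^sup>2"
    using norm_diff_sq_le[of "rotp (Y$fst e) *v tt (fst e) (snd e) + tcol (Y$fst e)" "tcol (Y$snd e)"]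
    unfolding LT_def .
  have "qf \<kappa> \<tau> Rt tt e Y \<le> \<kappa> (fst e) (snd e) * (2 * (norm (rotp (Y$fst e)))\<^sup>2 + 2 * (norm (rotp (Y$snd e)))\<^sup>2)
       + \<tau> (fst e) (snd e) * (2 * (norm (rotp (Y$fst e) *v tt (fst e) (snd e) + tcol (Y$fst e)))\<^sup>2
             + 2 * (norm (tcol (Y$snd e)))\<^sup>2)"
    unfolding qf_L using mult_left_mono[OF 1 k] mult_left_mono[OF 2 t] by linarith
  then show ?thesis unfolding pf_def by (simp add: algebra_simps)
qed

lemma pf_nonneg: "0 \<le> \<kappa> (fst e) (snd e) \<Longrightarrow> 0 \<le> \<tau> (fst e) (snd e) \<Longrightarrow> 0 \<le> pf \<kappa> \<tau> tt e Y"
  unfolding pf_def by simp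

definition PR :: "real^('d::finite) option^'d option" where
  "PR = (\<Sum>c\<in>UNIV. outer (axis (Some c) 1))"

lemma qnorm2_PR: "qnorm2 PR Z = (norm (rotp Z))\<^sup>2"
  unfolding PR_def qnorm2_sum qnorm2_outer norm_sq_cols[of "rotp Z"] column_rotp ..

lemma qnorm2_eN: "qnorm2 (outer (axis None 1)) Z = (norm (tcol Z))\<^sup>2"
  unfolding qnorm2_outer tcol_mv ..

lemma qnorm2_wt: "qnorm2 (outer (wt t)) Z = (norm (rotp Z *v t + tcol Z))\<^sup>2"
  unfolding qnorm2_outer rotp_t_tcol ..

definition Pe :: "('b \<Rightarrow> 'b \<Rightarrow> real) \<Rightarrow> ('b \<Rightarrow> 'b \<Rightarrow> real) \<Rightarrow> ('b \<Rightarrow> 'b \<Rightarrow> real^'d)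
     \<Rightarrow> 'b \<times> 'b \<Rightarrow> 'b \<Rightarrow> real^('d::finite) option^'d option" where
  "Pe \<kappa> \<tau> tt e b =
     (if b = fst e then (2 * \<kappa> (fst e) (snd e)) *\<^sub>R PR + (2 * \<tau> (fst e) (snd e)) *\<^sub>R outer (wt (tt (fst e) (snd e))) else 0)
   + (if b = snd e then (2 * \<kappa> (fst e) (snd e)) *\<^sub>R PR + (2 * \<tau> (fst e) (snd e)) *\<^sub>R outer (axis None 1) else 0)"

lemma qnorm2_if: "qnorm2 (if c then A else 0) Z = (if c then qnorm2 A Z else 0)"
  by simp

lemma pf_Pe: "pf \<kappa> \<tau> tt e (Y::real^('d::finite) option^'d^('b::finite)) = (\<Sum>b\<in>UNIV. qnorm2 (Pe \<kappa> \<tau> tt e b) (Y$b))"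
  unfolding Pe_def qnorm2_add qnorm2_if qnorm2_scale qnorm2_PR qnorm2_eN qnorm2_wt sum.distrib
  by (simp add: pf_def algebra_simps)

lemma Pe_nonneg: "0 \<le> \<kappa> (fst e) (snd e) \<Longrightarrow> 0 \<le> \<tau> (fst e) (snd e) \<Longrightarrow> 0 \<le> qnorm2 (Pe \<kappa> \<tau> tt e b) (Z::real^('d::finite) option^'d)"
  unfolding Pe_def by (simp add: qnorm2_add qnorm2_scale qnorm2_PR qnorm2_outer)

lemma transpose_mat1: "transpose (mat 1 :: real^'n^'n) = mat 1" by (rule transpose_mat)

lemma Pe_sym: "transpose (Pe \<kappa> \<tau> tt e b) = Pe \<kappa> \<tau> tt e b"
  unfolding Pe_def PR_def
  by (simp add: transpose_add' transpose_scale' transpose_sum' transpose_outer transpose_zero')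

definition wRe :: "('b \<Rightarrow> 'b \<Rightarrow> real^'d^'d) \<Rightarrow> 'b \<times> 'b \<Rightarrow> 'd \<Rightarrow> real^(('b::finite) \<times> ('d::finite) option)" where
  "wRe Rt e c' = lift (fst e) (wR (Rt (fst e) (snd e)) c') - lift (snd e) (axis (Some c') 1)"
definition wTe :: "('b \<Rightarrow> 'b \<Rightarrow> real^'d) \<Rightarrow> 'b \<times> 'b \<Rightarrow> real^(('b::finite) \<times> ('d::finite) option)" where
  "wTe tt e = lift (fst e) (wt (tt (fst e) (snd e))) - lift (snd e) (axis None 1)"
definition Qm where
  "Qm \<kappa> \<tau> Rt tt e = \<kappa> (fst e) (snd e) *\<^sub>R (\<Sum>c\<in>UNIV. outer (wRe Rt e c)) + \<tau> (fst e) (snd e) *\<^sub>R outer (wTe tt e)"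

lemma column_diff': "column c (A - B) = column c A - column c (B::real^'n^'m)"
  by (simp add: column_def vec_eq_iff)

lemma LR_flat: "column c (LR Rt e Y) = flat Y *v wRe Rt e c"
  unfolding LR_def wRe_def column_diff' column_rotp_R column_rotp mv_diff flat_lift ..

lemma LT_flat: "LT tt e Y = flat Y *v wTe tt e"
  unfolding LT_def wTe_def mv_diff flat_lift rotp_t_tcol unfolding tcol_mv ..

lemma qf_Qm: "qnorm2 (Qm \<kappa> \<tau> Rt tt e) (flat Y) = qf \<kappa> \<tau> Rt tt e Y"
  unfolding Qm_def qf_L qnorm2_add qnorm2_scale qnorm2_sum qnorm2_outer norm_sq_cols[of "LR Rt e Y"] LR_flat LT_flat ..

lemma Qm_sym: "transpose (Qm \<kappa> \<tau> Rt tt e) = Qm \<kappa> \<tau> Rt tt e"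
  unfolding Qm_def by (simp add: transpose_add' transpose_scale' transpose_sum' transpose_outer)

lemma Qm_nb:
  fixes Rt :: "'b::finite \<Rightarrow> 'b \<Rightarrow> real^('d::finite)^'d" and node :: "'b \<Rightarrow> 'a"
  assumes "intra node e"
  shows "node_blockdiag node (Qm \<kappa> \<tau> Rt tt e)"
  unfolding node_blockdiag_def
proof (intro allI impI)
  fix p q :: "'b \<times> 'd option" assume pq: "node (fst p) \<noteq> node (fst q)"
  have lz: "\<And>u v r. fst r \<noteq> fst e \<Longrightarrow> fst r \<noteq> snd e \<Longrightarrow> (lift (fst e) u - lift (snd e) v)$r = 0"
    by (simp add: lift_def)
  have out: "fst p \<noteq> fst e \<and> fst p \<noteq> snd e \<or> fst q \<noteq> fst e \<and> fst q \<noteq> snd e"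
    using pq assms unfolding intra_def by metis
  have "\<And>u v. (outer (lift (fst e) u - lift (snd e) v))$p$q = 0"
    unfolding outer_def lift_def using out by auto
  then show "Qm \<kappa> \<tau> Rt tt e $ p $ q = 0"
    unfolding Qm_def wRe_def wTe_def by (simp add: sum_component)
qed


lemma sum_split: "finite A \<Longrightarrow> sum f A = sum f {x\<in>A. P x} + sum f {x\<in>A. \<not> P x}"
proof -
  assume "finite A"
  have "A = {x\<in>A. P x} \<union> {x\<in>A. \<not> P x}" by auto
  then have "sum f A = sum f ({x\<in>A. P x} \<union> {x\<in>A. \<not> P x})" by simp
  also have "\<dots> = sum f {x\<in>A. P x} + sum f {x\<in>A. \<not> P x}"
    using \<open>finite A\<close> by (intro sum.union_disjoint) auto
  finally show ?thesis .
qed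

lemma qnorm2_bd_sum:
  "qnorm2 (blockdiag (\<lambda>b. (\<Sum>e\<in>A. c e *\<^sub>R Pe \<kappa> \<tau> tt e b) + z *\<^sub>R mat 1)) (flat Y)
     = (\<Sum>e\<in>A. c e * pf \<kappa> \<tau> tt e Y) + z * (norm Y)\<^sup>2"
proof -
  have "qnorm2 (blockdiag (\<lambda>b. (\<Sum>e\<in>A. c e *\<^sub>R Pe \<kappa> \<tau> tt e b) + z *\<^sub>R mat 1)) (flat Y)
     = (\<Sum>b\<in>UNIV. \<Sum>e\<in>A. c e * qnorm2 (Pe \<kappa> \<tau> tt e b) (Y$b)) + (\<Sum>b\<in>UNIV. z * (norm (Y$b))\<^sup>2)"
    unfolding qnorm2_blockdiag qnorm2_add qnorm2_sum qnorm2_scale qnorm2_id sum.distrib ..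
  also have "(\<Sum>b\<in>UNIV. \<Sum>e\<in>A. c e * qnorm2 (Pe \<kappa> \<tau> tt e b) (Y$b)) = (\<Sum>e\<in>A. \<Sum>b\<in>UNIV. c e * qnorm2 (Pe \<kappa> \<tau> tt e b) (Y$b))"
    by (rule sum.swap)
  also have "\<dots> = (\<Sum>e\<in>A. c e * pf \<kappa> \<tau> tt e Y)"
    unfolding pf_Pe sum_distrib_left ..
  also have "(\<Sum>b\<in>UNIV. z * (norm (Y$b))\<^sup>2) = z * (norm Y)\<^sup>2"
    unfolding norm_sq_rows[of Y] sum_distrib_left ..
  finally show ?thesis .
qed

lemma sym_bd_sum:
  "transpose (blockdiag (\<lambda>b. (\<Sum>e\<in>A. c e *\<^sub>R Pe \<kappa> \<tau> tt e b) + z *\<^sub>R mat 1))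
     = blockdiag (\<lambda>b. (\<Sum>e\<in>A. c e *\<^sub>R Pe \<kappa> \<tau> tt e b) + z *\<^sub>R mat 1)"
  by (intro transpose_blockdiag) (simp add: transpose_add' transpose_sum' transpose_scale' Pe_sym transpose_mat)

lemma nb_add: "node_blockdiag node A \<Longrightarrow> node_blockdiag node B \<Longrightarrow> node_blockdiag node (A + B)"
  by (simp add: node_blockdiag_def)
lemma nb_sum: "(\<And>i. i \<in> I \<Longrightarrow> node_blockdiag node (A i)) \<Longrightarrow> node_blockdiag node (\<Sum>i\<in>I. A i)"
  by (simp add: node_blockdiag_def sum_component)
lemma nb_bd: "node_blockdiag node (blockdiag P)"
  by (auto simp: node_blockdiag_def blockdiag_def)

lemma flat_zero[simp]: "flat 0 = 0"
  by (simp add: flat_def vec_eq_iff)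

lemma restr_zero: "(\<forall>b. node b = \<alpha> \<longrightarrow> X$b = Xk$b) \<Longrightarrow> restr node \<alpha> (X - Xk) = (0::('v::ab_group_add)^('b::finite))"
  by (simp add: restr_def vec_eq_iff)

lemma ex2I: "P a b \<Longrightarrow> \<exists>x y. P x y" by blast

lemma loewner_formI:
  fixes A B :: "real^('b::finite \<times> 'c::finite)^('b \<times> 'c)"
  assumes "transpose A = A" "transpose B = B"
    and "\<And>Y::real^'c^('r::finite)^'b. qnorm2 B (flat Y) \<le> qnorm2 A (flat Y)"
  shows "loewner_ge A B"
  unfolding loewner_ge_def
proof (rule psdI_form[where 'r='r])
  show "transpose (A - B) = A - B" using assms by (simp add: transpose_diff')
  fix Z :: "real^('b \<times> 'c)^'r"
  obtain Y where "Z = flat Y" using flat_surj by blast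
  then show "0 \<le> qnorm2 (A - B) Z" using assms(3)[of Y] by (simp add: qnorm2_diff)
qed

lemma psd_formI:
  fixes A :: "real^('b::finite \<times> 'c::finite)^('b \<times> 'c)"
  assumes "transpose A = A"
    and "\<And>Y::real^'c^('r::finite)^'b. 0 \<le> qnorm2 A (flat Y)"
  shows "psd A"
proof (rule psdI_form[where 'r='r])
  show "transpose A = A" by fact
  fix Z :: "real^('b \<times> 'c)^'r"
  obtain Y where "Z = flat Y" using flat_surj by blast
  then show "0 \<le> qnorm2 A Z" using assms(2)[of Y] by simp
qed

theorem proposition4:
  fixes node :: "'b::finite \<Rightarrow> 'a::finite"
    and Ed :: "('b \<times> 'b) set"
    and \<kappa> \<tau> :: "'b \<Rightarrow> 'b \<Rightarrow> real"
    and Rt :: "'b \<Rightarrow> 'b \<Rightarrow> real^'d^'d"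
    and tt :: "'b \<Rightarrow> 'b \<Rightarrow> real^('d::finite)"
    and \<rho> \<rho>' :: "real \<Rightarrow> real"
    and \<xi> \<zeta> :: real
  assumes d2: "CARD('d) \<ge> 2"
    and nodes_nonempty: "surj node"
    and data: "\<forall>e\<in>Ed. rotation_matrix (Rt (fst e) (snd e)) \<and> 0 \<le> \<kappa> (fst e) (snd e) \<and> 0 \<le> \<tau> (fst e) (snd e)"
    and LK: "loss_kernel \<rho> \<rho>' TYPE(real^'d option^'d^'b)"
    and xi: "0 \<le> \<xi>" and zeta: "\<xi> \<le> \<zeta>"
  defines "F \<equiv> Fobj node \<rho> \<kappa> \<tau> Rt tt Ed"
    and "G \<equiv> Gf node \<rho> \<rho>' \<kappa> \<tau> Rt tt Ed \<xi>"
    and "H \<equiv> Hf node \<rho> \<rho>' \<kappa> \<tau> Rt tt Ed \<zeta>"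
  shows "\<exists>PiC::real^('b \<times> 'd option)^('b \<times> 'd option). psd PiC \<and>
    (\<forall>Xk::real^'d option^'d^'b. feasible Xk \<longrightarrow>
     (\<exists>Pik :: 'b \<Rightarrow> real^'d option^'d option.
        (\<forall>b. psd (Pik b)) \<and>
        (let gF = grad F Xk;
             Hi = (\<lambda>b X. qnorm2 (Pik b) (X$b - Xk$b) / 2 + gF$b \<bullet> (X$b - Xk$b));
             Ha = (\<lambda>\<alpha> X. qnorm2 (blockdiag Pik) (flat (restr node \<alpha> (X - Xk))) / 2
                          + restr node \<alpha> gF \<bullet> (X - Xk))
         in
          (\<forall>X. H X Xk = (\<Sum>\<alpha>\<in>UNIV. Ha \<alpha> X) + F Xk) \<and>
          (\<forall>\<alpha> X. Ha \<alpha> X = (\<Sum>b\<in>{b. node b = \<alpha>}. Hi b X)) \<and>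
          (\<forall>X. H X Xk = qnorm2 (blockdiag Pik) (flat (X - Xk)) / 2 + gF \<bullet> (X - Xk) + F Xk) \<and>
          (\<forall>X. H X Xk \<ge> G X Xk \<and> G X Xk \<ge> F X) \<and>
          H Xk Xk = G Xk Xk \<and> G Xk Xk = F Xk \<and>
          (\<exists>\<Gamma> M::real^('b \<times> 'd option)^('b \<times> 'd option).
             psd \<Gamma> \<and> node_blockdiag node \<Gamma> \<and>
             (\<forall>X. G X Xk = qnorm2 \<Gamma> (flat (X - Xk)) / 2 + gF \<bullet> (X - Xk) + F Xk) \<and>
             psd M \<and> (\<forall>Y. qnorm2 M (flat Y) = Mform node \<rho>' \<kappa> \<tau> Rt tt Ed Xk Y) \<and>
             loewner_ge (blockdiag Pik) \<Gamma> \<and> loewner_ge \<Gamma> M \<and>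
             (let Ga = (\<lambda>\<alpha> X. qnorm2 \<Gamma> (flat (restr node \<alpha> (X - Xk))) / 2
                               + restr node \<alpha> gF \<bullet> (X - Xk))
              in (\<forall>\<alpha> X. Ha \<alpha> X \<ge> Ga \<alpha> X) \<and>
                 (\<forall>\<alpha> X. (\<forall>b. node b = \<alpha> \<longrightarrow> X$b = Xk$b) \<longrightarrow> Ha \<alpha> X = Ga \<alpha> X))) \<and>
          loewner_ge PiC (blockdiag Pik))))"
proof -
  have finEd: "finite Ed" by simp
  have kE: "\<And>e. e \<in> Ed \<Longrightarrow> 0 \<le> \<kappa> (fst e) (snd e)" and tE: "\<And>e. e \<in> Ed \<Longrightarrow> 0 \<le> \<tau> (fst e) (snd e)"
    and RE: "\<And>e. e \<in> Ed \<Longrightarrow> rotation_matrix (Rt (fst e) (snd e))"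
    using data by auto
  define EI where "EI = {e\<in>Ed. intra node e}"
  define EO where "EO = {e\<in>Ed. \<not> intra node e}"
  have EIs: "EI \<subseteq> Ed" and EOs: "EO \<subseteq> Ed" by (auto simp: EI_def EO_def)
  have split: "\<And>f. sum f Ed = sum f EI + sum f EO"
    unfolding EI_def EO_def by (rule sum_split[OF finEd])
  have pfnn: "\<And>e Y. e \<in> Ed \<Longrightarrow> 0 \<le> pf \<kappa> \<tau> tt e Y"
    by (intro pf_nonneg[where \<kappa>=\<kappa> and \<tau>=\<tau>] kE tE)
  have qfnn: "\<And>e Y. e \<in> Ed \<Longrightarrow> 0 \<le> qf \<kappa> \<tau> Rt tt e Y"
    by (intro qf_nonneg[where \<kappa>=\<kappa> and \<tau>=\<tau>] kE tE)
  have qfpf: "\<And>e Y. e \<in> Ed \<Longrightarrow> qf \<kappa> \<tau> Rt tt e Y \<le> pf \<kappa> \<tau> tt e Y"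
    by (intro qf_le_pf[where \<kappa>=\<kappa> and \<tau>=\<tau>] kE tE RE)
  have Penn: "\<And>e b Z. e \<in> Ed \<Longrightarrow> 0 \<le> qnorm2 (Pe \<kappa> \<tau> tt e b) (Z::real^'d option^'d)"
    by (intro Pe_nonneg[where \<kappa>=\<kappa> and \<tau>=\<tau>] kE tE)
  have omb: "\<And>e X. e \<in> Ed \<Longrightarrow> 0 \<le> omega node \<rho>' \<kappa> \<tau> Rt tt e X \<and> omega node \<rho>' \<kappa> \<tau> Rt tt e X \<le> 1"
    using omega_bounds[where \<kappa>=\<kappa> and \<tau>=\<tau>, OF LK kE tE] by blast
  have gradE: "\<And>e X h. e \<in> Ed \<Longrightarrow> grad (Fe node \<rho> \<kappa> \<tau> Rt tt e) X \<bullet> h = omega node \<rho>' \<kappa> \<tau> Rt tt e X * Dq \<kappa> \<tau> Rt tt e X h / 2"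
    by (intro Fe_grad[where \<kappa>=\<kappa> and \<tau>=\<tau>, OF LK] kE tE)
  have derE: "\<And>e X. e \<in> Ed \<Longrightarrow> (Fe node \<rho> \<kappa> \<tau> Rt tt e has_derivative
          (\<lambda>h. omega node \<rho>' \<kappa> \<tau> Rt tt e X * Dq \<kappa> \<tau> Rt tt e X h / 2)) (at X)"
    by (intro Fe_deriv[where \<kappa>=\<kappa> and \<tau>=\<tau>, OF LK] kE tE)
  have intraE: "\<And>e X Y. e \<in> Ed \<Longrightarrow> intra node e \<Longrightarrow> Fe node \<rho> \<kappa> \<tau> Rt tt e (X + Y) = Fe node \<rho> \<kappa> \<tau> Rt tt e X + grad (Fe node \<rho> \<kappa> \<tau> Rt tt e) X \<bullet> Y
           + qf \<kappa> \<tau> Rt tt e Y / 2"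
    by (intro Fe_intra_eq[where \<kappa>=\<kappa> and \<tau>=\<tau>, OF LK] kE tE)
  have interE: "\<And>e X Y. e \<in> Ed \<Longrightarrow> \<not> intra node e \<Longrightarrow> Fe node \<rho> \<kappa> \<tau> Rt tt e (X + Y) \<le> Fe node \<rho> \<kappa> \<tau> Rt tt e X + grad (Fe node \<rho> \<kappa> \<tau> Rt tt e) X \<bullet> Y
           + omega node \<rho>' \<kappa> \<tau> Rt tt e X * qf \<kappa> \<tau> Rt tt e Y / 2"
    by (intro Fe_inter_le[where \<kappa>=\<kappa> and \<tau>=\<tau>, OF LK] kE tE)
  define PiC where "PiC = blockdiag (\<lambda>b. (\<Sum>e\<in>Ed. (\<lambda>_. 1) e *\<^sub>R Pe \<kappa> \<tau> tt e b) + \<zeta> *\<^sub>R mat 1)"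
  have qPiC: "\<And>Y::real^'d option^'d^'b. qnorm2 PiC (flat Y) = (\<Sum>e\<in>Ed. 1 * pf \<kappa> \<tau> tt e Y) + \<zeta> * (norm Y)\<^sup>2"
    unfolding PiC_def by (rule qnorm2_bd_sum)
  have symPiC: "transpose PiC = PiC" unfolding PiC_def by (rule sym_bd_sum)
  have psdPiC: "psd PiC"
  proof (rule psd_formI[where 'r='d])
    show "transpose PiC = PiC" by (rule symPiC)
    fix Y :: "real^'d option^'d^'b"
    show "0 \<le> qnorm2 PiC (flat Y)" unfolding qPiC
      using xi zeta pfnn
      by (intro add_nonneg_nonneg sum_nonneg mult_nonneg_nonneg) auto
  qed
  show ?thesis
  proof (intro exI[of _ PiC] conjI allI impI)
    show "psd PiC" by (rule psdPiC)
    fix Xk :: "real^'d option^'d^'b"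
    assume "feasible Xk"
    define om where "om e = omega node \<rho>' \<kappa> \<tau> Rt tt e Xk" for e
    have om0: "\<And>e. e \<in> Ed \<Longrightarrow> 0 \<le> om e" and om1: "\<And>e. e \<in> Ed \<Longrightarrow> om e \<le> 1"
      unfolding om_def using omb by auto
    have omI: "\<And>e. e \<in> EI \<Longrightarrow> om e = 1" by (simp add: om_def omega_def EI_def)
    define Pik where "Pik b = (\<Sum>e\<in>Ed. om e *\<^sub>R Pe \<kappa> \<tau> tt e b) + \<zeta> *\<^sub>R mat 1" for b
    define Gam where "Gam = (\<Sum>e\<in>EI. Qm \<kappa> \<tau> Rt tt e)
       + blockdiag (\<lambda>b. (\<Sum>e\<in>EO. om e *\<^sub>R Pe \<kappa> \<tau> tt e b) + \<xi> *\<^sub>R mat 1)"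
    define M where "M = (\<Sum>e\<in>EI. Qm \<kappa> \<tau> Rt tt e) + (\<Sum>e\<in>EO. om e *\<^sub>R Qm \<kappa> \<tau> Rt tt e)"
    define gF where "gF = grad F Xk"
    have derF: "\<And>e. e \<in> Ed \<Longrightarrow> (Fe node \<rho> \<kappa> \<tau> Rt tt e has_derivative
        (\<lambda>h. grad (Fe node \<rho> \<kappa> \<tau> Rt tt e) Xk \<bullet> h)) (at Xk)"
      by (rule has_derivative_eq_rhs[OF derE]) (auto simp: fun_eq_iff gradE)
    have eqF: "F = (\<lambda>X. \<Sum>e\<in>Ed. Fe node \<rho> \<kappa> \<tau> Rt tt e X)"
      by (rule ext) (simp add: F_def Fobj_def)
    have "((\<lambda>X. \<Sum>e\<in>Ed. Fe node \<rho> \<kappa> \<tau> Rt tt e X) has_derivative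
            (\<lambda>h. \<Sum>e\<in>Ed. grad (Fe node \<rho> \<kappa> \<tau> Rt tt e) Xk \<bullet> h)) (at Xk)"
      by (rule has_derivative_sum) (rule derF)
    then have "(F has_derivative (\<lambda>h. (\<Sum>e\<in>Ed. grad (Fe node \<rho> \<kappa> \<tau> Rt tt e) Xk) \<bullet> h)) (at Xk)"
      unfolding eqF by (rule has_derivative_eq_rhs) (simp add: fun_eq_iff inner_sum_left)
    then have gF_eq: "gF = (\<Sum>e\<in>Ed. grad (Fe node \<rho> \<kappa> \<tau> Rt tt e) Xk)"
      unfolding gF_def by (rule grad_eq)
    have qPik: "\<And>Y::real^'d option^'d^'b. qnorm2 (blockdiag Pik) (flat Y) = (\<Sum>e\<in>Ed. om e * pf \<kappa> \<tau> tt e Y) + \<zeta> * (norm Y)\<^sup>2"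
      unfolding Pik_def by (rule qnorm2_bd_sum)
    have qGam: "\<And>Y::real^'d option^'d^'b. qnorm2 Gam (flat Y) = (\<Sum>e\<in>EI. qf \<kappa> \<tau> Rt tt e Y) + ((\<Sum>e\<in>EO. om e * pf \<kappa> \<tau> tt e Y) + \<xi> * (norm Y)\<^sup>2)"
      unfolding Gam_def qnorm2_add qnorm2_bd_sum qnorm2_sum qf_Qm ..
    have qM: "\<And>Y. qnorm2 M (flat Y) = Mform node \<rho>' \<kappa> \<tau> Rt tt Ed Xk Y"
      unfolding M_def Mform_def qnorm2_add qnorm2_sum qnorm2_scale qf_Qm EI_def EO_def om_def ..
    have qM': "\<And>Y::real^'d option^'d^'b. qnorm2 M (flat Y) = (\<Sum>e\<in>EI. qf \<kappa> \<tau> Rt tt e Y) + (\<Sum>e\<in>EO. om e * qf \<kappa> \<tau> Rt tt e Y)"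
      unfolding M_def qnorm2_add qnorm2_sum qnorm2_scale qf_Qm ..
    have c1: "\<And>Y::real^'d option^'d^'b. qnorm2 Gam (flat Y) \<le> qnorm2 (blockdiag Pik) (flat Y)"
    proof -
      fix Y
      have "(\<Sum>e\<in>EI. qf \<kappa> \<tau> Rt tt e Y) \<le> (\<Sum>e\<in>EI. om e * pf \<kappa> \<tau> tt e Y)"
        using EIs by (intro sum_mono) (auto simp: omI qfpf)
      moreover have "\<xi> * (norm Y)\<^sup>2 \<le> \<zeta> * (norm Y)\<^sup>2" using zeta by (intro mult_right_mono) auto
      ultimately show "?thesis Y" unfolding qGam qPik split[of "\<lambda>e. om e * pf \<kappa> \<tau> tt e Y"] by linarith
    qed
    have c2: "\<And>Y::real^'d option^'d^'b. qnorm2 M (flat Y) \<le> qnorm2 Gam (flat Y)"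
    proof -
      fix Y
      have "(\<Sum>e\<in>EO. om e * qf \<kappa> \<tau> Rt tt e Y) \<le> (\<Sum>e\<in>EO. om e * pf \<kappa> \<tau> tt e Y)"
        using EOs by (intro sum_mono mult_left_mono) (auto simp: om0 qfpf)
      moreover have "0 \<le> \<xi> * (norm Y)\<^sup>2" using xi by simp
      ultimately show "?thesis Y" unfolding qGam qM' by linarith
    qed
    have c3: "\<And>Y::real^'d option^'d^'b. qnorm2 (blockdiag Pik) (flat Y) \<le> qnorm2 PiC (flat Y)"
    proof -
      fix Y
      have "(\<Sum>e\<in>Ed. om e * pf \<kappa> \<tau> tt e Y) \<le> (\<Sum>e\<in>Ed. 1 * pf \<kappa> \<tau> tt e Y)"
        by (intro sum_mono mult_right_mono) (auto simp: om1 pfnn)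
      then show "?thesis Y" unfolding qPik qPiC by linarith
    qed
    have c0: "\<And>Y::real^'d option^'d^'b. 0 \<le> qnorm2 M (flat Y)"
      unfolding qM' using EIs EOs
      by (intro add_nonneg_nonneg sum_nonneg mult_nonneg_nonneg) (auto simp: om0 qfnn)
    have symPik: "\<And>b. transpose (Pik b) = Pik b"
      unfolding Pik_def by (simp add: transpose_add' transpose_sum' transpose_scale' Pe_sym transpose_mat)
    have symBPik: "transpose (blockdiag Pik) = blockdiag Pik"
      by (rule transpose_blockdiag[OF symPik])
    have symGam: "transpose Gam = Gam"
      unfolding Gam_def transpose_add' sym_bd_sum transpose_sum' Qm_sym ..
    have symM: "transpose M = M"
      unfolding M_def by (simp add: transpose_add' transpose_sum' transpose_scale' Qm_sym)
    have psdPik: "\<And>b. psd (Pik b)"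
    proof (rule psdI_form[where 'r='d])
      fix b show "transpose (Pik b) = Pik b" by (rule symPik)
      fix Z :: "real^'d option^'d"
      show "0 \<le> qnorm2 (Pik b) Z"
        unfolding Pik_def qnorm2_add qnorm2_sum qnorm2_scale qnorm2_id using zeta xi
        by (intro add_nonneg_nonneg sum_nonneg mult_nonneg_nonneg) (auto simp: om0 Penn)
    qed
    have L1: "loewner_ge (blockdiag Pik) Gam" by (rule loewner_formI[OF symBPik symGam c1])
    have L2: "loewner_ge Gam M" by (rule loewner_formI[OF symGam symM c2])
    have L3: "loewner_ge PiC (blockdiag Pik)" by (rule loewner_formI[OF symPiC symBPik c3])
    have psdM: "psd M" by (rule psd_formI[OF symM c0])
    have psdGam: "psd Gam" by (rule psd_formI[OF symGam]) (use c0 c2 in \<open>blast intro: order_trans\<close>)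
    have nbGam: "node_blockdiag node Gam"
      unfolding Gam_def by (intro nb_add nb_sum nb_bd Qm_nb) (simp add: EI_def)
    have FXk: "F Xk = (\<Sum>e\<in>Ed. Fe node \<rho> \<kappa> \<tau> Rt tt e Xk)" by (simp add: eqF)
    have gFY: "\<And>Y. gF \<bullet> Y = (\<Sum>e\<in>Ed. grad (Fe node \<rho> \<kappa> \<tau> Rt tt e) Xk \<bullet> Y)"
      by (simp add: gF_eq inner_sum_left)
    have Hrep: "\<And>X. H X Xk = qnorm2 (blockdiag Pik) (flat (X - Xk)) / 2 + gF \<bullet> (X - Xk) + F Xk"
    proof -
      fix X
      have "H X Xk = (\<Sum>e\<in>Ed. om e * pf \<kappa> \<tau> tt e (X - Xk) / 2 + grad (Fe node \<rho> \<kappa> \<tau> Rt tt e) Xk \<bullet> (X - Xk)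
              + Fe node \<rho> \<kappa> \<tau> Rt tt e Xk) + \<zeta> / 2 * (norm (X - Xk))\<^sup>2"
        unfolding H_def Hf_def Ef_def om_def ..
      also have "\<dots> = ((\<Sum>e\<in>Ed. om e * pf \<kappa> \<tau> tt e (X - Xk)) + \<zeta> * (norm (X - Xk))\<^sup>2) / 2
              + (\<Sum>e\<in>Ed. grad (Fe node \<rho> \<kappa> \<tau> Rt tt e) Xk \<bullet> (X - Xk))
              + (\<Sum>e\<in>Ed. Fe node \<rho> \<kappa> \<tau> Rt tt e Xk)"
        by (simp add: sum.distrib sum_divide_distrib[symmetric] add_divide_distrib)
      finally show "?thesis X" unfolding qPik gFY FXk .
    qed
    have Grep: "\<And>X. G X Xk = qnorm2 Gam (flat (X - Xk)) / 2 + gF \<bullet> (X - Xk) + F Xk"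
    proof -
      fix X
      let ?g = "\<lambda>e. grad (Fe node \<rho> \<kappa> \<tau> Rt tt e) Xk \<bullet> (X - Xk)"
      let ?f = "\<lambda>e. Fe node \<rho> \<kappa> \<tau> Rt tt e Xk"
      have a: "(\<Sum>e\<in>EI. Fe node \<rho> \<kappa> \<tau> Rt tt e X) = (\<Sum>e\<in>EI. ?f e + ?g e + qf \<kappa> \<tau> Rt tt e (X - Xk) / 2)"
      proof (rule sum.cong[OF refl])
        fix e assume "e \<in> EI"
        then have "e \<in> Ed" "intra node e" by (auto simp: EI_def)
        from intraE[OF this, of Xk "X - Xk"] show "Fe node \<rho> \<kappa> \<tau> Rt tt e X = ?f e + ?g e + qf \<kappa> \<tau> Rt tt e (X - Xk) / 2"
          by simp
      qed
      have "G X Xk = (\<Sum>e\<in>EI. Fe node \<rho> \<kappa> \<tau> Rt tt e X)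
           + (\<Sum>e\<in>EO. om e * pf \<kappa> \<tau> tt e (X - Xk) / 2 + ?g e + ?f e) + \<xi> / 2 * (norm (X - Xk))\<^sup>2"
        unfolding G_def Gf_def Ef_def om_def EI_def EO_def ..
      also have "\<dots> = ((\<Sum>e\<in>EI. qf \<kappa> \<tau> Rt tt e (X - Xk)) + ((\<Sum>e\<in>EO. om e * pf \<kappa> \<tau> tt e (X - Xk)) + \<xi> * (norm (X - Xk))\<^sup>2)) / 2
           + (sum ?g EI + sum ?g EO) + (sum ?f EI + sum ?f EO)"
        unfolding a by (simp add: sum.distrib sum_divide_distrib[symmetric] add_divide_distrib)
      finally show "?thesis X" unfolding qGam gFY FXk split[of ?g] split[of ?f] .
    qed
    have GF: "\<And>X. F X \<le> G X Xk"
    proof -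
      fix X
      have "(\<Sum>e\<in>EO. Fe node \<rho> \<kappa> \<tau> Rt tt e X) \<le> (\<Sum>e\<in>EO. Ef node \<rho> \<rho>' \<kappa> \<tau> Rt tt e X Xk)"
      proof (rule sum_mono)
        fix e assume "e \<in> EO"
        then have e: "e \<in> Ed" "\<not> intra node e" by (auto simp: EO_def)
        have "Fe node \<rho> \<kappa> \<tau> Rt tt e X \<le> Fe node \<rho> \<kappa> \<tau> Rt tt e Xk + grad (Fe node \<rho> \<kappa> \<tau> Rt tt e) Xk \<bullet> (X - Xk)
           + om e * qf \<kappa> \<tau> Rt tt e (X - Xk) / 2"
          using interE[OF e, of Xk "X - Xk"] by (simp add: om_def)
        moreover have "om e * qf \<kappa> \<tau> Rt tt e (X - Xk) \<le> om e * pf \<kappa> \<tau> tt e (X - Xk)"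
          by (intro mult_left_mono qfpf om0 e)
        ultimately show "Fe node \<rho> \<kappa> \<tau> Rt tt e X \<le> Ef node \<rho> \<rho>' \<kappa> \<tau> Rt tt e X Xk"
          unfolding Ef_def om_def by simp
      qed
      moreover have "0 \<le> \<xi> / 2 * (norm (X - Xk))\<^sup>2" using xi by simp
      ultimately show "F X \<le> G X Xk"
        unfolding G_def Gf_def eqF split[of "\<lambda>e. Fe node \<rho> \<kappa> \<tau> Rt tt e X"] EI_def[symmetric] EO_def[symmetric]
        by linarith
    qed
    have restr_b: "\<And>\<alpha> X b. (restr node \<alpha> (X - Xk))$b = (if node b = \<alpha> then X$b - Xk$b else 0)"
      by (simp add: restr_def)
    have Ha_eq: "\<And>\<alpha> X. qnorm2 (blockdiag Pik) (flat (restr node \<alpha> (X - Xk))) / 2 + restr node \<alpha> gF \<bullet> (X - Xk)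
        = (\<Sum>b\<in>{b. node b = \<alpha>}. qnorm2 (Pik b) (X$b - Xk$b) / 2 + gF$b \<bullet> (X$b - Xk$b))"
    proof -
      fix \<alpha> X
      have "qnorm2 (blockdiag Pik) (flat (restr node \<alpha> (X - Xk))) / 2 + restr node \<alpha> gF \<bullet> (X - Xk)
          = (\<Sum>b\<in>UNIV. if node b = \<alpha> then qnorm2 (Pik b) (X$b - Xk$b) / 2 + gF$b \<bullet> (X$b - Xk$b) else 0)"
        unfolding qnorm2_blockdiag restr_b inner_vec_def sum_divide_distrib sum.distrib[symmetric]
        by (rule sum.cong) (auto simp: restr_def)
      also have "\<dots> = (\<Sum>b\<in>{b. node b = \<alpha>}. qnorm2 (Pik b) (X$b - Xk$b) / 2 + gF$b \<bullet> (X$b - Xk$b))"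
        by (simp add: sum.inter_filter[symmetric])
      finally show "?thesis \<alpha> X" .
    qed
    have Hsum: "\<And>X. (\<Sum>\<alpha>\<in>UNIV. \<Sum>b\<in>{b. node b = \<alpha>}. qnorm2 (Pik b) (X$b - Xk$b) / 2 + gF$b \<bullet> (X$b - Xk$b))
        = qnorm2 (blockdiag Pik) (flat (X - Xk)) / 2 + gF \<bullet> (X - Xk)"
    proof -
      fix X
      let ?h = "\<lambda>b. qnorm2 (Pik b) (X$b - Xk$b) / 2 + gF$b \<bullet> (X$b - Xk$b)"
      have "sum ?h UNIV = (\<Sum>\<alpha>\<in>node ` UNIV. sum ?h {b\<in>UNIV. node b = \<alpha>})"
        by (rule sum.image_gen) simp
      also have "\<dots> = (\<Sum>\<alpha>\<in>UNIV. sum ?h {b. node b = \<alpha>})"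
        using nodes_nonempty by simp
      finally have "(\<Sum>\<alpha>\<in>UNIV. sum ?h {b. node b = \<alpha>}) = sum ?h UNIV" by simp
      also have "\<dots> = qnorm2 (blockdiag Pik) (flat (X - Xk)) / 2 + gF \<bullet> (X - Xk)"
        unfolding qnorm2_blockdiag inner_vec_def sum_divide_distrib sum.distrib by simp
      finally show "?thesis X" .
    qed
    have Hsum2: "\<And>X. H X Xk = (\<Sum>\<alpha>\<in>UNIV. qnorm2 (blockdiag Pik) (flat (restr node \<alpha> (X - Xk))) / 2 + restr node \<alpha> gF \<bullet> (X - Xk)) + F Xk"
      unfolding Ha_eq Hsum Hrep ..
    have GH: "\<And>X. G X Xk \<le> H X Xk" unfolding Hrep Grep using c1 by simp
    have Hxx: "H Xk Xk = G Xk Xk" unfolding Hrep Grep by simp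
    have Gxx: "G Xk Xk = F Xk" unfolding Grep by simp
    have Ga_le: "\<And>\<alpha> X. qnorm2 Gam (flat (restr node \<alpha> (X - Xk))) / 2 + restr node \<alpha> gF \<bullet> (X - Xk)
       \<le> qnorm2 (blockdiag Pik) (flat (restr node \<alpha> (X - Xk))) / 2 + restr node \<alpha> gF \<bullet> (X - Xk)"
      using c1 by simp
    have Ga_eq: "\<And>\<alpha> X. (\<forall>b. node b = \<alpha> \<longrightarrow> X$b = Xk$b) \<Longrightarrow>
       qnorm2 (blockdiag Pik) (flat (restr node \<alpha> (X - Xk))) / 2 + restr node \<alpha> gF \<bullet> (X - Xk)
       = qnorm2 Gam (flat (restr node \<alpha> (X - Xk))) / 2 + restr node \<alpha> gF \<bullet> (X - Xk)"
      by (simp add: restr_zero)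
    show "\<exists>Pik. (\<forall>b. psd (Pik b)) \<and> (let gF = grad F Xk;
             Hi = (\<lambda>b X. qnorm2 (Pik b) (X$b - Xk$b) / 2 + gF$b \<bullet> (X$b - Xk$b));
             Ha = (\<lambda>\<alpha> X. qnorm2 (blockdiag Pik) (flat (restr node \<alpha> (X - Xk))) / 2
                          + restr node \<alpha> gF \<bullet> (X - Xk))
         in
          (\<forall>X. H X Xk = (\<Sum>\<alpha>\<in>UNIV. Ha \<alpha> X) + F Xk) \<and>
          (\<forall>\<alpha> X. Ha \<alpha> X = (\<Sum>b\<in>{b. node b = \<alpha>}. Hi b X)) \<and>
          (\<forall>X. H X Xk = qnorm2 (blockdiag Pik) (flat (X - Xk)) / 2 + gF \<bullet> (X - Xk) + F Xk) \<and>
          (\<forall>X. H X Xk \<ge> G X Xk \<and> G X Xk \<ge> F X) \<and>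
          H Xk Xk = G Xk Xk \<and> G Xk Xk = F Xk \<and>
          (\<exists>\<Gamma> M::real^('b \<times> 'd option)^('b \<times> 'd option).
             psd \<Gamma> \<and> node_blockdiag node \<Gamma> \<and>
             (\<forall>X. G X Xk = qnorm2 \<Gamma> (flat (X - Xk)) / 2 + gF \<bullet> (X - Xk) + F Xk) \<and>
             psd M \<and> (\<forall>Y. qnorm2 M (flat Y) = Mform node \<rho>' \<kappa> \<tau> Rt tt Ed Xk Y) \<and>
             loewner_ge (blockdiag Pik) \<Gamma> \<and> loewner_ge \<Gamma> M \<and>
             (let Ga = (\<lambda>\<alpha> X. qnorm2 \<Gamma> (flat (restr node \<alpha> (X - Xk))) / 2
                               + restr node \<alpha> gF \<bullet> (X - Xk))
              in (\<forall>\<alpha> X. Ha \<alpha> X \<ge> Ga \<alpha> X) \<and>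
                 (\<forall>\<alpha> X. (\<forall>b. node b = \<alpha> \<longrightarrow> X$b = Xk$b) \<longrightarrow> Ha \<alpha> X = Ga \<alpha> X))) \<and>
          loewner_ge PiC (blockdiag Pik))"
      apply (rule exI[of _ Pik])
      apply (unfold Let_def gF_def[symmetric])
      apply (intro conjI allI impI ex2I[of _ Gam M])
      apply (rule psdPik Hsum2 Ha_eq Hrep GH GF Hxx Gxx psdGam nbGam Grep psdM qM L1 L2 Ga_le Ga_eq L3 | assumption)+
      done
  qed
qed

end
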